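(* Let $\xi\in\mathcal N$. If $\xi\cap(x+Q_\sigma)\ne\emptyset$ for all $x\in\mathbb Z^d$ and all $\sigma\in\{-1,+1\}^d$, then $\xi\in\mathcal N_{\rm pol}$.
   Context: $\mathcal N$ is the set of locally finite subsets of $\mathbb R^d$. For $\xi\in\mathcal N$ and $x\in\xi$, $\mathrm{Vor}(x|\xi)=\{y\in\mathbb R^d:|y-x|\le|y-z|\ \forall z\in\xi\}$. $\mathcal N_{\rm pol}$ is the set of $\xi\in\mathcal N$ such that $\mathrm{Vor}(x|\xi)$ is a convex polytope (equivalently a bounded polyhedron, i.e. a bounded intersection of finitely many closed half-spaces) for every $x\in\xi$. For $\sigma\in\{-1,+1\}^d$, the open orthant is $Q_\sigma=\{x\in\mathbb R^d:\sigma_ix_i>0,\ 1\le i\le d\}$. *)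

theory Defs
  imports "HOL-Analysis.Analysis"
begin

definition locally_finite_pts :: "('a::euclidean_space) set \<Rightarrow> bool" where
  "locally_finite_pts \<xi> \<longleftrightarrow> (\<forall>B. bounded B \<longrightarrow> finite (\<xi> \<inter> B))"

definition Vor :: "('a::euclidean_space) \<Rightarrow> 'a set \<Rightarrow> 'a set" where
  "Vor x \<xi> = {y. \<forall>z\<in>\<xi>. dist y x \<le> dist y z}"

definition N_pol :: "('a::euclidean_space) set set" where
  "N_pol = {\<xi>. locally_finite_pts \<xi> \<and> (\<forall>x\<in>\<xi>. polytope (Vor x \<xi>))}"

definition orthant :: "(real ^ 'd) \<Rightarrow> (real ^ 'd) set" where
  "orthant \<sigma> = {x. \<forall>i. \<sigma> $ i * x $ i > 0}"

definition sign_vectors :: "(real ^ 'd) set" where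
  "sign_vectors = {\<sigma>. \<forall>i. \<sigma> $ i \<in> {-1, 1}}"

definition int_points :: "(real ^ 'd) set" where
  "int_points = {x. \<forall>i. x $ i \<in> \<int>}"

end

theory Submission
  imports Defs
begin

lemma halfsp_char:
  fixes x y z :: "'a::euclidean_space"
  shows "dist y x \<le> dist y z \<longleftrightarrow> 2 * ((z - x) \<bullet> y) \<le> z \<bullet> z - x \<bullet> x"
proof -
  have "dist y x \<le> dist y z \<longleftrightarrow> (y - x) \<bullet> (y - x) \<le> (y - z) \<bullet> (y - z)"
    by (simp add: dist_norm norm_le)
  also have "\<dots> \<longleftrightarrow> 2 * ((z - x) \<bullet> y) \<le> z \<bullet> z - x \<bullet> x"
    by (simp add: inner_diff_left inner_diff_right inner_commute algebra_simps)
  finally show ?thesis .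
qed

lemma halfsp_char2:
  fixes x y z :: "'a::euclidean_space"
  shows "dist y x \<le> dist y z \<longleftrightarrow> 2 * ((y - x) \<bullet> (z - x)) \<le> (z - x) \<bullet> (z - x)"
  unfolding halfsp_char
  by (simp add: inner_diff_left inner_diff_right inner_commute algebra_simps)

lemma finite_sign_vectors: "finite (sign_vectors :: (real ^ 'd) set)"
proof -
  have inj: "inj_on (\<lambda>\<sigma>::real^'d. {i. \<sigma>$i = 1}) sign_vectors"
  proof (rule inj_onI)
    fix s t :: "real^'d" assume s: "s \<in> sign_vectors" and t: "t \<in> sign_vectors"
      and eq: "{i. s$i = 1} = {i. t$i = 1}"
    show "s = t"
    proof (rule vec_eq_iff[THEN iffD2], rule allI)
      fix i
      have "s$i = 1 \<longleftrightarrow> t$i = 1" using eq by blast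
      moreover have "s$i \<in> {-1,1}" "t$i \<in> {-1,1}" using s t by (auto simp: sign_vectors_def)
      ultimately show "s$i = t$i" by auto
    qed
  qed
  have "finite ((\<lambda>\<sigma>::real^'d. {i. \<sigma>$i = 1}) ` sign_vectors)"
    by (rule finite_subset[of _ "Pow UNIV"]) auto
  then show ?thesis using finite_imageD inj by blast
qed

theorem lemma2p3:
  fixes \<xi> :: "(real ^ 'd) set"
  assumes "locally_finite_pts \<xi>"
    and "\<forall>x\<in>int_points. \<forall>\<sigma>\<in>sign_vectors. \<xi> \<inter> ((\<lambda>q. x + q) ` orthant \<sigma>) \<noteq> {}"
  shows "\<xi> \<in> N_pol"
proof -
  have "polytope (Vor x \<xi>)" if x: "x \<in> \<xi>" for x
  proof -
    define H where "H z = {y. dist y x \<le> dist y z}" for z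
    have ex: "\<exists>z\<in>\<xi>. \<forall>i. \<sigma>$i * (z - x)$i > 0" if s: "\<sigma> \<in> sign_vectors" for \<sigma>
    proof -
      define p where "p = (\<chi> i. if \<sigma>$i = 1 then of_int (ceiling (x$i)) else of_int (floor (x$i)) :: real^'d)"
      have "p \<in> int_points" by (simp add: p_def int_points_def)
      with assms(2) s obtain q where q: "q \<in> orthant \<sigma>" "p + q \<in> \<xi>" by blast
      have "\<sigma>$i * (p + q - x)$i > 0" for i
      proof -
        have "\<sigma>$i * q$i > 0" using q by (simp add: orthant_def)
        moreover have "\<sigma>$i * (p$i - x$i) \<ge> 0"
        proof -
          have "\<sigma>$i = 1 \<or> \<sigma>$i = -1" using s by (auto simp: sign_vectors_def)
          then show ?thesis
            by (auto simp: p_def ceiling_correct)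
        qed
        ultimately show ?thesis by (simp add: algebra_simps)
      qed
      then show ?thesis using q(2) by (intro bexI[of _ "p + q"]) auto
    qed
    then obtain zf where zf: "\<And>\<sigma>. \<sigma> \<in> sign_vectors \<Longrightarrow> zf \<sigma> \<in> \<xi> \<and> (\<forall>i. \<sigma>$i * (zf \<sigma> - x)$i > 0)"
      by metis
    define m where "m \<sigma> = Min (range (\<lambda>i. \<sigma>$i * (zf \<sigma> - x)$i))" for \<sigma>
    have mpos: "m \<sigma> > 0" if "\<sigma> \<in> sign_vectors" for \<sigma>
      using zf[OF that] unfolding m_def by (subst Min_gr_iff) auto
    have mle: "m \<sigma> \<le> \<sigma>$i * (zf \<sigma> - x)$i" for \<sigma> i
      unfolding m_def by (rule Min_le) auto
    define C where "C \<sigma> = ((zf \<sigma> - x) \<bullet> (zf \<sigma> - x)) / (2 * m \<sigma>)" for \<sigma>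
    define r where "r = sum C sign_vectors"
    have Cle: "C \<sigma> \<le> r" if "\<sigma> \<in> sign_vectors" for \<sigma>
      unfolding r_def
    proof (rule member_le_sum[OF that _ finite_sign_vectors])
      fix s assume "s \<in> sign_vectors - {\<sigma>}"
      then show "0 \<le> C s" using mpos[of s] by (simp add: C_def)
    qed
    define K where "K = (\<Inter>\<sigma>\<in>sign_vectors. H (zf \<sigma>))"
    have Kb: "K \<subseteq> cball x r"
    proof
      fix y assume y: "y \<in> K"
      define \<sigma> :: "real^'d" where "\<sigma> = (\<chi> i. if (y - x)$i \<ge> 0 then 1 else -1)"
      have s: "\<sigma> \<in> sign_vectors" by (simp add: \<sigma>_def sign_vectors_def)
      let ?z = "zf \<sigma>"
      have "y \<in> H ?z" using y s by (auto simp: K_def)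
      then have A: "2 * ((y - x) \<bullet> (?z - x)) \<le> (?z - x) \<bullet> (?z - x)"
        by (simp add: H_def halfsp_char2)
      have "m \<sigma> * norm (y - x) \<le> m \<sigma> * (\<Sum>i\<in>UNIV. \<bar>(y - x)$i\<bar>)"
        using mpos[OF s] norm_le_l1_cart[of "y - x"] by simp
      also have "\<dots> = (\<Sum>i\<in>UNIV. \<bar>(y - x)$i\<bar> * m \<sigma>)" by (simp add: sum_distrib_left mult.commute)
      also have "\<dots> \<le> (\<Sum>i\<in>UNIV. \<bar>(y - x)$i\<bar> * (\<sigma>$i * (?z - x)$i))"
        by (rule sum_mono, rule mult_left_mono[OF mle]) simp
      also have "\<dots> = (\<Sum>i\<in>UNIV. (y - x)$i * (?z - x)$i)"
        by (rule sum.cong) (auto simp: \<sigma>_def)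
      also have "\<dots> = (y - x) \<bullet> (?z - x)" by (simp add: inner_vec_def)
      finally have "m \<sigma> * norm (y - x) \<le> (y - x) \<bullet> (?z - x)" .
      with A have "norm (y - x) \<le> C \<sigma>"
        using mpos[OF s] by (simp add: C_def field_simps)
      with Cle[OF s] show "y \<in> cball x r" by (simp add: dist_norm norm_minus_commute)
    qed
    have VorH: "Vor x \<xi> = (\<Inter>z\<in>\<xi>. H z)"
      by (auto simp: Vor_def H_def)
    define T where "T = zf ` sign_vectors \<union> (\<xi> \<inter> cball x (2 * r))"
    have Tfin: "finite T"
      using assms(1) finite_sign_vectors unfolding T_def locally_finite_pts_def by auto
    have Tsub: "T \<subseteq> \<xi>" using zf by (auto simp: T_def)
    have VorT: "Vor x \<xi> = (\<Inter>z\<in>T. H z)"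
    proof
      show "Vor x \<xi> \<subseteq> (\<Inter>z\<in>T. H z)" using Tsub VorH by auto
    next
      show "(\<Inter>z\<in>T. H z) \<subseteq> Vor x \<xi>"
      proof
        fix y assume y: "y \<in> (\<Inter>z\<in>T. H z)"
        then have "y \<in> K" by (auto simp: K_def T_def)
        with Kb have yr: "dist x y \<le> r" by auto
        have "y \<in> H z" if "z \<in> \<xi>" for z
        proof (cases "dist x z \<le> 2 * r")
          case True then show ?thesis using y that by (auto simp: T_def)
        next
          case False
          have "dist x z \<le> dist x y + dist y z" by (rule dist_triangle)
          then show ?thesis using False yr by (simp add: H_def dist_commute)
        qed
        then show "y \<in> Vor x \<xi>" using VorH by auto
      qed
    qed
    have "polyhedron (\<Inter>z\<in>T. H z)"
    proof (rule polyhedron_Inter)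
      show "finite (H ` T)" using Tfin by simp
    next
      fix S assume "S \<in> H ` T"
      then obtain z where "S = H z" by auto
      then have "S = {y. (2 *\<^sub>R (z - x)) \<bullet> y \<le> z \<bullet> z - x \<bullet> x}"
        by (simp add: H_def halfsp_char)
      then show "polyhedron S" using polyhedron_halfspace_le[of "2 *\<^sub>R (z - x)" "z \<bullet> z - x \<bullet> x"] by simp
    qed
    moreover have "bounded (Vor x \<xi>)"
    proof -
      have "Vor x \<xi> \<subseteq> K" using VorH zf by (auto simp: K_def)
      then show ?thesis using Kb bounded_cball bounded_subset by blast
    qed
    ultimately show ?thesis by (simp add: polytope_eq_bounded_polyhedron VorT)
  qed
  then show ?thesis using assms(1) by (simp add: N_pol_def)
qed

end
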